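(* Let $G=(V,E)$ be a finite simple graph. (i) If $x$ is a tree-like vertex of $G$ and $y\ne x$ is any vertex, then $x$ is a tree-like vertex of the graph obtained from $G$ by removing $y$ and its incident edges. (ii) If $Y\subseteq V$ is a set of tree-like vertices of $G$ and $G'$ is the induced subgraph of $G$ on $V\setminus Y$, then $\ell(G')=\ell(G)$.
   Context: A vertex $x$ of degree $d_x$ is tree-like if removing $x$ and its incident edges from $G$ increases the number of connected components by $d_x-1$. For a graph $H$, $\ell(H)=|E(H)|-|V(H)|+c(H)$, where $c(H)$ is the number of connected components of $H$. *)

theory Defs
  imports Main
begin

definition simple_graph :: "'a set \<Rightarrow> 'a set set \<Rightarrow> bool" where
  "simple_graph V E \<longleftrightarrow> finite V \<and>
     (\<forall>e\<in>E. \<exists>u v. e = {u, v} \<and> u \<noteq> v \<and> u \<in> V \<and> v \<in> V)"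

definition adj :: "'a set \<Rightarrow> 'a set set \<Rightarrow> 'a \<Rightarrow> 'a \<Rightarrow> bool" where
  "adj V E u v \<longleftrightarrow> u \<in> V \<and> v \<in> V \<and> {u, v} \<in> E"

definition components :: "'a set \<Rightarrow> 'a set set \<Rightarrow> 'a set set" where
  "components V E = (\<lambda>u. {v. (adj V E)\<^sup>*\<^sup>* u v}) ` V"

definition num_components :: "'a set \<Rightarrow> 'a set set \<Rightarrow> nat" where
  "num_components V E = card (components V E)"

definition degree :: "'a set set \<Rightarrow> 'a \<Rightarrow> nat" where
  "degree E x = card {e\<in>E. x \<in> e}"

definition del_vertex_V :: "'a set \<Rightarrow> 'a \<Rightarrow> 'a set" where
  "del_vertex_V V x = V - {x}"

definition del_vertex_E :: "'a set set \<Rightarrow> 'a \<Rightarrow> 'a set set" where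
  "del_vertex_E E x = {e\<in>E. x \<notin> e}"

definition induced_E :: "'a set set \<Rightarrow> 'a set \<Rightarrow> 'a set set" where
  "induced_E E W = {e\<in>E. e \<subseteq> W}"

text \<open>Tree-like vertex: removing x increases the number of components by d_x - 1
  (computed over the integers, so an isolated vertex decreases it by 1).\<close>
definition tree_like :: "'a set \<Rightarrow> 'a set set \<Rightarrow> 'a \<Rightarrow> bool" where
  "tree_like V E x \<longleftrightarrow> x \<in> V \<and>
     int (num_components (del_vertex_V V x) (del_vertex_E E x))
       = int (num_components V E) + int (degree E x) - 1"

definition ell :: "'a set \<Rightarrow> 'a set set \<Rightarrow> int" where
  "ell V E = int (card E) - int (card V) + int (num_components V E)"

end

theory Submission
  imports Defs
begin

abbreviation conn where "conn V F \<equiv> (adj V F)\<^sup>*\<^sup>*"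

lemma adj_sym: "adj V F a b = adj V F b a"
  by (auto simp: adj_def insert_commute)

lemma conn_sym: "conn V F a b \<Longrightarrow> conn V F b a"
proof -
  have "symp (adj V F)" using adj_sym by (metis sympI)
  then have "symp (conn V F)" by (rule symp_rtranclp)
  then show "conn V F a b \<Longrightarrow> conn V F b a" by (meson sympD)
qed

lemma conn_mono: "F \<subseteq> F' \<Longrightarrow> conn V F a b \<Longrightarrow> conn V F' a b"
proof -
  assume "F \<subseteq> F'" "conn V F a b"
  moreover have "\<And>a b. adj V F a b \<longrightarrow> adj V F' a b" using \<open>F \<subseteq> F'\<close> by (auto simp: adj_def)
  ultimately show ?thesis using mono_rtranclp by metis
qed

lemma conn_insert:
  assumes "u \<in> V" "v \<in> V"
  shows "conn V (insert {u,v} F) a b \<longleftrightarrow>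
     conn V F a b \<or> (conn V F a u \<and> conn V F v b) \<or> (conn V F a v \<and> conn V F u b)"
proof
  assume "conn V (insert {u,v} F) a b"
  then show "conn V F a b \<or> (conn V F a u \<and> conn V F v b) \<or> (conn V F a v \<and> conn V F u b)"
  proof (induction rule: rtranclp_induct)
    case base then show ?case by simp
  next
    case (step b c)
    from step.hyps(2) have "adj V F b c \<or> (b = u \<and> c = v) \<or> (b = v \<and> c = u)"
      by (auto simp: adj_def doubleton_eq_iff)
    then show ?case
    proof (elim disjE)
      assume h: "adj V F b c"
      show ?thesis using step.IH rtranclp.rtrancl_into_rtrancl[of "adj V F" _ b c, OF _ h] by blast
    next
      assume h: "b = u \<and> c = v"
      show ?thesis using step.IH h by (metis rtranclp.rtrancl_refl rtranclp_trans conn_sym)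
    next
      assume h: "b = v \<and> c = u"
      show ?thesis using step.IH h by (metis rtranclp.rtrancl_refl rtranclp_trans conn_sym)
    qed
  qed
next
  have sub: "F \<subseteq> insert {u,v} F" by auto
  have e1: "conn V (insert {u,v} F) u v" using assms by (auto simp: adj_def)
  then have e2: "conn V (insert {u,v} F) v u" by (rule conn_sym)
  assume "conn V F a b \<or> (conn V F a u \<and> conn V F v b) \<or> (conn V F a v \<and> conn V F u b)"
  then show "conn V (insert {u,v} F) a b"
    using conn_mono[OF sub] e1 e2 by (meson rtranclp_trans)
qed

lemma cls_eq: "conn V F a u \<Longrightarrow> {b. conn V F a b} = {b. conn V F u b}"
  by (auto intro: rtranclp_trans conn_sym)

lemma comp_insert_conn:
  assumes "u \<in> V" "v \<in> V" "conn V F u v"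
  shows "components V (insert {u,v} F) = components V F"
proof -
  have vu: "conn V F v u" using assms(3) by (rule conn_sym)
  have "\<And>a. {b. conn V (insert {u,v} F) a b} = {b. conn V F a b}"
    using assms vu conn_insert[OF assms(1,2)] by (meson rtranclp_trans)
  then show ?thesis unfolding components_def by simp
qed

lemma comp_insert_nconn:
  assumes fin: "finite V" and uv: "u \<in> V" "v \<in> V" and nc: "\<not> conn V F u v"
  shows "num_components V F = num_components V (insert {u,v} F) + 1"
proof -
  define Cu where "Cu = {b. conn V F u b}"
  define Cv where "Cv = {b. conn V F v b}"
  let ?C = "components V F"
  let ?C' = "components V (insert {u,v} F)"
  have cl': "{b. conn V (insert {u,v} F) a b} =
     (if conn V F a u \<or> conn V F a v then Cu \<union> Cv else {b. conn V F a b})" for a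
  proof (cases "conn V F a u")
    case True
    then have "\<not> conn V F a v" using nc by (meson rtranclp_trans conn_sym)
    then show ?thesis using True conn_insert[OF uv, of F a] unfolding Cu_def Cv_def
      by (auto intro: rtranclp_trans conn_sym)
  next
    case False
    then show ?thesis using conn_insert[OF uv, of F a] nc unfolding Cu_def Cv_def
      by (auto intro: rtranclp_trans conn_sym)
  qed
  have CuC: "Cu \<in> ?C" using uv unfolding components_def Cu_def by auto
  have CvC: "Cv \<in> ?C" using uv unfolding components_def Cv_def by auto
  have neq: "Cu \<noteq> Cv" using nc unfolding Cu_def Cv_def
    by (metis mem_Collect_eq rtranclp.rtrancl_refl conn_sym)
  have eq: "?C' = insert (Cu \<union> Cv) (?C - {Cu, Cv})"
  proof
    show "?C' \<subseteq> insert (Cu \<union> Cv) (?C - {Cu, Cv})"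
    proof
      fix X assume "X \<in> ?C'"
      then obtain a where a: "a \<in> V" "X = {b. conn V (insert {u,v} F) a b}"
        unfolding components_def by auto
      show "X \<in> insert (Cu \<union> Cv) (?C - {Cu, Cv})"
      proof (cases "conn V F a u \<or> conn V F a v")
        case True then show ?thesis using a cl' by simp
      next
        case False
        then have X: "X = {b. conn V F a b}" using a cl' by simp
        have "X \<noteq> Cu" "X \<noteq> Cv" using False unfolding X Cu_def Cv_def
          by (metis mem_Collect_eq rtranclp.rtrancl_refl conn_sym)+
        then show ?thesis using X a(1) unfolding components_def by auto
      qed
    qed
  next
    show "insert (Cu \<union> Cv) (?C - {Cu, Cv}) \<subseteq> ?C'"
    proof
      fix X assume X: "X \<in> insert (Cu \<union> Cv) (?C - {Cu, Cv})"
      show "X \<in> ?C'"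
      proof (cases "X = Cu \<union> Cv")
        case True
        then have "X = {b. conn V (insert {u,v} F) u b}" using cl'[of u] by simp
        then show ?thesis using uv unfolding components_def by auto
      next
        case False
        then obtain a where a: "a \<in> V" "X = {b. conn V F a b}" "X \<noteq> Cu" "X \<noteq> Cv"
          using X unfolding components_def by auto
        have "\<not> conn V F a u" "\<not> conn V F a v" using a cls_eq unfolding Cu_def Cv_def by metis+
        then have "X = {b. conn V (insert {u,v} F) a b}" using cl'[of a] a by simp
        then show ?thesis using a unfolding components_def by auto
      qed
    qed
  qed
  have finC: "finite ?C" using fin unfolding components_def by simp
  have notin: "Cu \<union> Cv \<notin> ?C - {Cu, Cv}"
  proof
    assume "Cu \<union> Cv \<in> ?C - {Cu, Cv}"
    then obtain a where a: "a \<in> V" "Cu \<union> Cv = {b. conn V F a b}" "Cu \<union> Cv \<noteq> Cu"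
      unfolding components_def by auto
    have "u \<in> Cu" "v \<in> Cv" unfolding Cu_def Cv_def by auto
    then have "conn V F a u" "conn V F a v" using a(2) by auto
    then show False using nc by (meson rtranclp_trans conn_sym)
  qed
  have "card ?C' = Suc (card (?C - {Cu, Cv}))" using eq notin finC by simp
  moreover have "card {Cu, Cv} \<le> card ?C" using finC CuC CvC by (intro card_mono) auto
  moreover have "card (?C - {Cu, Cv}) + 2 = card ?C"
    using calculation(2) finC CuC CvC neq by (simp add: card_Diff_subset)
  ultimately show ?thesis unfolding num_components_def by simp
qed

definition edges_in :: "'a set \<Rightarrow> 'a set set \<Rightarrow> bool" where
  "edges_in V D \<longleftrightarrow> (\<forall>e\<in>D. \<exists>u v. e = {u,v} \<and> u \<in> V \<and> v \<in> V)"

lemma ell_insert: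
  assumes "finite V" "u \<in> V" "v \<in> V" "finite F" "{u,v} \<notin> F"
  shows "ell V (insert {u,v} F) = ell V F + (if conn V F u v then 1 else 0)"
proof (cases "conn V F u v")
  case True
  then show ?thesis using comp_insert_conn[OF assms(2,3) True] assms
    unfolding ell_def num_components_def by simp
next
  case False
  then show ?thesis using comp_insert_nconn[OF assms(1,2,3) False] assms
    unfolding ell_def by simp
qed

lemma ell_mono:
  assumes "finite D" "finite V" "finite F" "edges_in V D"
  shows "ell V F \<le> ell V (F \<union> D)"
  using assms
proof (induction D rule: finite_induct)
  case empty then show ?case by simp
next
  case (insert e D)
  then have ed: "edges_in V D" unfolding edges_in_def by simp
  obtain u v where e: "e = {u,v}" "u \<in> V" "v \<in> V"
    using insert.prems unfolding edges_in_def by auto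
  show ?case
  proof (cases "e \<in> F \<union> D")
    case True
    then have "F \<union> insert e D = F \<union> D" by auto
    then show ?thesis using insert.IH insert.prems ed by simp
  next
    case False
    have "F \<union> insert e D = insert {u,v} (F \<union> D)" using e by auto
    moreover have "ell V (insert {u,v} (F \<union> D)) \<ge> ell V (F \<union> D)"
      using ell_insert[of V u v "F \<union> D"] e False insert.hyps insert.prems by simp
    ultimately show ?thesis using insert.IH insert.prems ed by simp
  qed
qed

lemma ell_supermod:
  assumes "finite D" "finite V" "finite F'" "F \<subseteq> F'" "D \<inter> F' = {}" "edges_in V D"
  shows "ell V (F \<union> D) - ell V F \<le> ell V (F' \<union> D) - ell V F'"
  using assms
proof (induction D rule: finite_induct)
  case empty then show ?case by simp
next
  case (insert e D)
  then have ed: "edges_in V D" unfolding edges_in_def by simp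
  obtain u v where e: "e = {u,v}" "u \<in> V" "v \<in> V"
    using insert.prems unfolding edges_in_def by auto
  have fF: "finite F" using insert.prems finite_subset by blast
  have n1: "e \<notin> F \<union> D" "e \<notin> F' \<union> D" using insert.hyps insert.prems by auto
  have i1: "ell V (F \<union> insert e D) = ell V (F \<union> D) + (if conn V (F \<union> D) u v then 1 else 0)"
    using ell_insert[of V u v "F \<union> D"] e n1 insert.hyps insert.prems fF by simp
  have i2: "ell V (F' \<union> insert e D) = ell V (F' \<union> D) + (if conn V (F' \<union> D) u v then 1 else 0)"
    using ell_insert[of V u v "F' \<union> D"] e n1 insert.hyps insert.prems by simp
  have "conn V (F \<union> D) u v \<Longrightarrow> conn V (F' \<union> D) u v"
    using conn_mono[of "F \<union> D" "F' \<union> D"] insert.prems by auto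
  then show ?case using i1 i2 insert.IH insert.prems ed by auto
qed

lemma ell_del_isolated:
  assumes "finite V" "x \<in> V" "\<forall>e\<in>F. x \<notin> e"
  shows "ell (V - {x}) F = ell V F"
proof -
  have adjeq: "adj (V - {x}) F = adj V F"
    using assms(3) by (auto simp: adj_def fun_eq_iff)
  have cx: "{b. conn V F x b} = {x}"
  proof -
    have "conn V F x b \<Longrightarrow> b = x" for b
      by (erule converse_rtranclpE) (use assms(3) in \<open>auto simp: adj_def\<close>)
    then show ?thesis by auto
  qed
  have ceq: "components V F = insert {x} (components (V - {x}) F)"
    unfolding components_def adjeq using cx assms(2) by auto
  have "{x} \<notin> components (V - {x}) F"
  proof
    assume "{x} \<in> components (V - {x}) F"
    then obtain a where "a \<in> V - {x}" "{b. conn V F a b} = {x}"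
      unfolding components_def adjeq by auto
    then show False by (metis mem_Collect_eq rtranclp.rtrancl_refl singletonD DiffE singletonI)
  qed
  moreover have "finite (components (V - {x}) F)" using assms(1) unfolding components_def by simp
  ultimately have "num_components V F = num_components (V - {x}) F + 1"
    unfolding num_components_def ceq by simp
  moreover have "card (V - {x}) + 1 = card V" using assms
    by (metis card_Suc_Diff1 Suc_eq_plus1)
  ultimately show ?thesis unfolding ell_def by simp
qed

lemma sg_finE: "simple_graph V E \<Longrightarrow> finite E"
proof -
  assume a: "simple_graph V E"
  then have "E \<subseteq> Pow V" unfolding simple_graph_def by auto
  moreover have "finite V" using a unfolding simple_graph_def by simp
  ultimately show ?thesis by (meson finite_Pow_iff finite_subset)
qed

lemma sg_edges_in: "simple_graph V E \<Longrightarrow> D \<subseteq> E \<Longrightarrow> edges_in V D"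
  unfolding simple_graph_def edges_in_def by blast

lemma tree_like_char:
  assumes sg: "simple_graph V E" and x: "x \<in> V"
  shows "tree_like V E x \<longleftrightarrow> ell V (del_vertex_E E x) = ell V E"
proof -
  have fV: "finite V" using sg unfolding simple_graph_def by simp
  have fE: "finite E" using sg by (rule sg_finE)
  have e1: "ell (V - {x}) (del_vertex_E E x) = ell V (del_vertex_E E x)"
    using ell_del_isolated[OF fV x] unfolding del_vertex_E_def by auto
  have "E = del_vertex_E E x \<union> {e\<in>E. x \<in> e}" "del_vertex_E E x \<inter> {e\<in>E. x \<in> e} = {}"
    unfolding del_vertex_E_def by auto
  then have "card E = card (del_vertex_E E x) + degree E x"
    unfolding degree_def using fE by (metis card_Un_disjoint finite_Un)
  moreover have "card (V - {x}) + 1 = card V" using fV x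
    by (metis card_Suc_Diff1 Suc_eq_plus1)
  ultimately show ?thesis using e1 x unfolding tree_like_def ell_def del_vertex_V_def by auto
qed

lemma sg_del: "simple_graph V E \<Longrightarrow> simple_graph (V - {y}) (del_vertex_E E y)"
  unfolding simple_graph_def del_vertex_E_def by fastforce

lemma part1:
  assumes sg: "simple_graph V E" and tl: "tree_like V E x" and y: "y \<in> V" "y \<noteq> x"
  shows "tree_like (del_vertex_V V y) (del_vertex_E E y) x"
proof -
  have fV: "finite V" using sg unfolding simple_graph_def by simp
  have fE: "finite E" using sg by (rule sg_finE)
  have x: "x \<in> V" using tl unfolding tree_like_def by simp
  define Ey where "Ey = del_vertex_E E y"
  define F where "F = del_vertex_E Ey x"
  define F' where "F' = del_vertex_E E x"
  define D where "D = {e\<in>E. x \<in> e \<and> y \<notin> e}"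
  have sg': "simple_graph (V - {y}) Ey" unfolding Ey_def using sg by (rule sg_del)
  have c0: "ell V F' = ell V E" using tree_like_char[OF sg x] tl unfolding F'_def by simp
  have r1: "ell (V - {y}) F = ell V F"
    using ell_del_isolated[OF fV y(1)] unfolding F_def Ey_def del_vertex_E_def by auto
  have r2: "ell (V - {y}) Ey = ell V Ey"
    using ell_del_isolated[OF fV y(1)] unfolding Ey_def del_vertex_E_def by auto
  have FD: "F \<union> D = Ey" unfolding F_def D_def Ey_def del_vertex_E_def by auto
  have fF': "finite F'" using fE unfolding F'_def del_vertex_E_def by simp
  have fD: "finite D" using fE unfolding D_def by simp
  have eD: "edges_in V D" using sg_edges_in[OF sg] unfolding D_def by auto
  have sm: "ell V (F \<union> D) - ell V F \<le> ell V (F' \<union> D) - ell V F'"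
    by (rule ell_supermod[OF fD fV fF' _ _ eD]) (auto simp: F_def F'_def D_def Ey_def del_vertex_E_def)
  have m1: "ell V (F' \<union> D) \<le> ell V ((F' \<union> D) \<union> (E - (F' \<union> D)))"
    by (rule ell_mono) (use fE fV fF' fD sg_edges_in[OF sg] in auto)
  have "(F' \<union> D) \<union> (E - (F' \<union> D)) = E" unfolding F'_def D_def del_vertex_E_def by auto
  with m1 have m1': "ell V (F' \<union> D) \<le> ell V E" by simp
  have fF: "finite F" using fE unfolding F_def Ey_def del_vertex_E_def by simp
  have m2: "ell V F \<le> ell V (F \<union> D)" by (rule ell_mono[OF fD fV fF eD])
  have "ell V F = ell V Ey" using sm m1' m2 c0 FD by simp
  then have "ell (V - {y}) (del_vertex_E Ey x) = ell (V - {y}) Ey" using r1 r2 F_def by simp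
  then show ?thesis using tree_like_char[OF sg'] x y unfolding Ey_def del_vertex_V_def by simp
qed

lemma part2:
  assumes "finite Y"
  shows "\<forall>V E. simple_graph V E \<and> Y \<subseteq> V \<and> (\<forall>x\<in>Y. tree_like V E x) \<longrightarrow>
            ell (V - Y) (induced_E E (V - Y)) = ell V E"
  using assms
proof (induction Y rule: finite_induct)
  case empty
  show ?case
  proof (intro allI impI)
    fix V E assume "simple_graph V E \<and> {} \<subseteq> V \<and> (\<forall>x\<in>{}. tree_like V E x)"
    then have "induced_E E V = E" unfolding simple_graph_def induced_E_def by auto
    then show "ell (V - {}) (induced_E E (V - {})) = ell V E" by simp
  qed
next
  case (insert y Y)
  show ?case
  proof (intro allI impI)
    fix V E assume h: "simple_graph V E \<and> insert y Y \<subseteq> V \<and> (\<forall>x\<in>insert y Y. tree_like V E x)"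
    then have sg: "simple_graph V E" and yV: "y \<in> V" and tly: "tree_like V E y" by auto
    have fV: "finite V" using sg unfolding simple_graph_def by simp
    have sg': "simple_graph (V - {y}) (del_vertex_E E y)" using sg by (rule sg_del)
    have "\<forall>x\<in>Y. tree_like (V - {y}) (del_vertex_E E y) x"
    proof
      fix x assume xY: "x \<in> Y"
      then have "tree_like V E x" "x \<noteq> y" using h insert.hyps by auto
      then show "tree_like (V - {y}) (del_vertex_E E y) x"
        using part1[OF sg _ yV] unfolding del_vertex_V_def by auto
    qed
    moreover have "Y \<subseteq> V - {y}" using h insert.hyps by auto
    ultimately have ih: "ell (V - {y} - Y) (induced_E (del_vertex_E E y) (V - {y} - Y))
        = ell (V - {y}) (del_vertex_E E y)" using insert.IH sg' by blast
    have "V - {y} - Y = V - insert y Y" by auto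
    moreover have "induced_E (del_vertex_E E y) (V - insert y Y) = induced_E E (V - insert y Y)"
      unfolding induced_E_def del_vertex_E_def by auto
    moreover have "ell (V - {y}) (del_vertex_E E y) = ell V (del_vertex_E E y)"
      using ell_del_isolated[OF fV yV] unfolding del_vertex_E_def by auto
    moreover have "ell V (del_vertex_E E y) = ell V E" using tree_like_char[OF sg yV] tly by simp
    ultimately show "ell (V - insert y Y) (induced_E E (V - insert y Y)) = ell V E" using ih by simp
  qed
qed

theorem proposition6p1:
  fixes V :: "'a set" and E :: "'a set set"
  assumes "simple_graph V E"
  shows "(\<forall>x y. tree_like V E x \<and> y \<in> V \<and> y \<noteq> x \<longrightarrow>
            tree_like (del_vertex_V V y) (del_vertex_E E y) x)
       \<and> (\<forall>Y. Y \<subseteq> V \<and> (\<forall>x\<in>Y. tree_like V E x) \<longrightarrow>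
            ell (V - Y) (induced_E E (V - Y)) = ell V E)"
proof (intro conjI allI impI)
  fix x y assume "tree_like V E x \<and> y \<in> V \<and> y \<noteq> x"
  then show "tree_like (del_vertex_V V y) (del_vertex_E E y) x" using part1[OF assms] by blast
next
  fix Y assume h: "Y \<subseteq> V \<and> (\<forall>x\<in>Y. tree_like V E x)"
  have "finite Y" using h assms unfolding simple_graph_def using finite_subset by blast
  then show "ell (V - Y) (induced_E E (V - Y)) = ell V E" using part2 h assms by blast
qed

end
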